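(* Let $\mathcal D$ be an (extremal epi, mono) category. Then there is a faithful functor $R\colon\mathcal P(\mathcal D)\to\mathcal Q(\mathcal D)$ which is the identity on underlying objects and morphisms of $\mathcal D$, given on objects by $R(d,F)=(d,\hat F)$ where $\hat F$ is the saturation of the class of extremal epimorphisms $e_\phi$ appearing in (extremal epi, mono)-factorisations $\phi=m_\phi e_\phi$ of the elements $\phi\in F$. Moreover $R\circ I=\mathrm{id}_{\mathcal Q(\mathcal D)}$, where $I\colon\mathcal Q(\mathcal D)\to\mathcal P(\mathcal D)$ is the inclusion, and $R$ is right adjoint to $I$.
   Context: For a category $\mathcal D$ and an object $d$, $M(d)$ denotes the class of all morphisms of $\mathcal D$ with source $d$, quasi-ordered by $\phi_1\ge\phi_2$ iff there is a morphism $h$ with $h\phi_1=\phi_2$. A projective filtration on $d$ is a non-empty, directed, saturated subclass $F\subseteq M(d)$ (saturated: $\phi_1\in F$ and $\phi_1\ge\phi_2$ imply $\phi_2\in F$). For a non-empty directed subclass $S\subseteq M(d)$, its saturation is $\{\psi\in M(d):\psi\le\phi\text{ for some }\phi\in S\}$. A subclass $S\subseteq F$ is initial if every $\phi\in F$ satisfies $\phi\le\psi$ for some $\psi\in S$. For $f\colon d'\to d$, the pull back $f^*(F)$ is $\{\phi f:\phi\in F\}$. The category $\mathcal P(\mathcal D)$ has objects pairs $(d,F)$ with $F$ a projective filtration on $d$; a morphism $(d_1,F_1)\to(d_2,F_2)$ is a morphism $f\colon d_1\to d_2$ of $\mathcal D$ with $f^*(F_2)\subseteq F_1$. A projective filtration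 is reduced if it has an initial subclass consisting of extremal epimorphisms; $\mathcal Q(\mathcal D)$ is the full subcategory of $\mathcal P(\mathcal D)$ on objects $(d,F)$ with $F$ reduced. An (extremal epi, mono) category is one in which every morphism factors as an extremal epimorphism followed by a monomorphism and such factorisations have the unique diagonal fill-in property. *)

theory Defs
  imports Main
begin

text \<open>A category with object type 'o and arrow type 'a. cmp g f is g after f.\<close>
record ('o,'a) cat =
  ob :: "'o set"
  ar :: "'a set"
  dm :: "'a \<Rightarrow> 'o"
  cd :: "'a \<Rightarrow> 'o"
  ident :: "'o \<Rightarrow> 'a"
  cmp :: "'a \<Rightarrow> 'a \<Rightarrow> 'a"

definition hom :: "('o,'a) cat \<Rightarrow> 'o \<Rightarrow> 'o \<Rightarrow> 'a set" where
  "hom C x y = {f \<in> ar C. dm C f = x \<and> cd C f = y}"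

definition category :: "('o,'a) cat \<Rightarrow> bool" where
  "category C \<longleftrightarrow>
     (\<forall>f \<in> ar C. dm C f \<in> ob C \<and> cd C f \<in> ob C) \<and>
     (\<forall>x \<in> ob C. ident C x \<in> hom C x x) \<and>
     (\<forall>f \<in> ar C. \<forall>g \<in> ar C. cd C f = dm C g \<longrightarrow> cmp C g f \<in> hom C (dm C f) (cd C g)) \<and>
     (\<forall>f \<in> ar C. cmp C (ident C (cd C f)) f = f \<and> cmp C f (ident C (dm C f)) = f) \<and>
     (\<forall>f \<in> ar C. \<forall>g \<in> ar C. \<forall>h \<in> ar C. cd C f = dm C g \<and> cd C g = dm C h \<longrightarrow>
        cmp C h (cmp C g f) = cmp C (cmp C h g) f)"

definition is_functor :: "('o,'a) cat \<Rightarrow> ('p,'b) cat \<Rightarrow> ('o \<Rightarrow> 'p) \<Rightarrow> ('a \<Rightarrow> 'b) \<Rightarrow> bool" where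
  "is_functor C E Fo Fa \<longleftrightarrow>
     (\<forall>x \<in> ob C. Fo x \<in> ob E) \<and>
     (\<forall>f \<in> ar C. Fa f \<in> hom E (Fo (dm C f)) (Fo (cd C f))) \<and>
     (\<forall>x \<in> ob C. Fa (ident C x) = ident E (Fo x)) \<and>
     (\<forall>f \<in> ar C. \<forall>g \<in> ar C. cd C f = dm C g \<longrightarrow> Fa (cmp C g f) = cmp E (Fa g) (Fa f))"

definition faithful :: "('o,'a) cat \<Rightarrow> ('p,'b) cat \<Rightarrow> ('o \<Rightarrow> 'p) \<Rightarrow> ('a \<Rightarrow> 'b) \<Rightarrow> bool" where
  "faithful C E Fo Fa \<longleftrightarrow> is_functor C E Fo Fa \<and>
     (\<forall>x \<in> ob C. \<forall>y \<in> ob C. inj_on Fa (hom C x y))"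

text \<open>L : C -> E is left adjoint to R : E -> C (L -| R), given by a unit whose
  components are universal arrows (Mac Lane, CWM IV.1, Thm 2(ii)).\<close>
definition adjunction :: "('o,'a) cat \<Rightarrow> ('p,'b) cat \<Rightarrow> ('o \<Rightarrow> 'p) \<Rightarrow> ('a \<Rightarrow> 'b)
    \<Rightarrow> ('p \<Rightarrow> 'o) \<Rightarrow> ('b \<Rightarrow> 'a) \<Rightarrow> bool" where
  "adjunction C E Lo La Ro Ra \<longleftrightarrow> is_functor C E Lo La \<and> is_functor E C Ro Ra \<and>
     (\<exists>\<eta>. \<forall>c \<in> ob C. \<eta> c \<in> hom C c (Ro (Lo c)) \<and>
        (\<forall>e \<in> ob E. \<forall>f \<in> hom C c (Ro e).
            \<exists>!g. g \<in> hom E (Lo c) e \<and> cmp C (Ra g) (\<eta> c) = f))"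

definition monic :: "('o,'a) cat \<Rightarrow> 'a \<Rightarrow> bool" where
  "monic C m \<longleftrightarrow> m \<in> ar C \<and>
     (\<forall>g \<in> ar C. \<forall>h \<in> ar C. cd C g = dm C m \<and> cd C h = dm C m \<and> dm C g = dm C h \<and>
        cmp C m g = cmp C m h \<longrightarrow> g = h)"

definition epic :: "('o,'a) cat \<Rightarrow> 'a \<Rightarrow> bool" where
  "epic C e \<longleftrightarrow> e \<in> ar C \<and>
     (\<forall>g \<in> ar C. \<forall>h \<in> ar C. dm C g = cd C e \<and> dm C h = cd C e \<and> cd C g = cd C h \<and>
        cmp C g e = cmp C h e \<longrightarrow> g = h)"

definition isom :: "('o,'a) cat \<Rightarrow> 'a \<Rightarrow> bool" where
  "isom C f \<longleftrightarrow> f \<in> ar C \<and>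
     (\<exists>g \<in> hom C (cd C f) (dm C f). cmp C g f = ident C (dm C f) \<and> cmp C f g = ident C (cd C f))"

definition extremal_epi :: "('o,'a) cat \<Rightarrow> 'a \<Rightarrow> bool" where
  "extremal_epi C e \<longleftrightarrow> epic C e \<and>
     (\<forall>m \<in> ar C. \<forall>g \<in> ar C. monic C m \<and> cd C g = dm C m \<and> e = cmp C m g \<longrightarrow> isom C m)"

definition extremal_epi_mono_category :: "('o,'a) cat \<Rightarrow> bool" where
  "extremal_epi_mono_category C \<longleftrightarrow> category C \<and>
     (\<forall>\<phi> \<in> ar C. \<exists>e m. extremal_epi C e \<and> monic C m \<and> cd C e = dm C m \<and> \<phi> = cmp C m e) \<and>
     (\<forall>e m u v. extremal_epi C e \<and> monic C m \<and> u \<in> ar C \<and> v \<in> ar C \<and>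
        dm C u = dm C e \<and> cd C u = dm C m \<and> dm C v = cd C e \<and> cd C v = cd C m \<and>
        cmp C v e = cmp C m u \<longrightarrow>
        (\<exists>!w. w \<in> hom C (cd C e) (dm C m) \<and> cmp C w e = u \<and> cmp C m w = v))"

definition M :: "('o,'a) cat \<Rightarrow> 'o \<Rightarrow> 'a set" where
  "M C d = {\<phi> \<in> ar C. dm C \<phi> = d}"

text \<open>fgeq C phi1 phi2 means phi1 \<ge> phi2, i.e. h phi1 = phi2 for some h.\<close>
definition fgeq :: "('o,'a) cat \<Rightarrow> 'a \<Rightarrow> 'a \<Rightarrow> bool" where
  "fgeq C \<phi>1 \<phi>2 \<longleftrightarrow> (\<exists>h \<in> ar C. dm C h = cd C \<phi>1 \<and> cmp C h \<phi>1 = \<phi>2)"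

definition directed :: "('o,'a) cat \<Rightarrow> 'a set \<Rightarrow> bool" where
  "directed C S \<longleftrightarrow> (\<forall>\<phi>1 \<in> S. \<forall>\<phi>2 \<in> S. \<exists>\<psi> \<in> S. fgeq C \<psi> \<phi>1 \<and> fgeq C \<psi> \<phi>2)"

definition saturated :: "('o,'a) cat \<Rightarrow> 'o \<Rightarrow> 'a set \<Rightarrow> bool" where
  "saturated C d F \<longleftrightarrow> (\<forall>\<phi>1 \<in> F. \<forall>\<phi>2 \<in> M C d. fgeq C \<phi>1 \<phi>2 \<longrightarrow> \<phi>2 \<in> F)"

definition proj_filtration :: "('o,'a) cat \<Rightarrow> 'o \<Rightarrow> 'a set \<Rightarrow> bool" where
  "proj_filtration C d F \<longleftrightarrow> F \<subseteq> M C d \<and> F \<noteq> {} \<and> directed C F \<and> saturated C d F"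

definition saturation :: "('o,'a) cat \<Rightarrow> 'o \<Rightarrow> 'a set \<Rightarrow> 'a set" where
  "saturation C d S = {\<psi> \<in> M C d. \<exists>\<phi> \<in> S. fgeq C \<phi> \<psi>}"

definition initial :: "('o,'a) cat \<Rightarrow> 'a set \<Rightarrow> 'a set \<Rightarrow> bool" where
  "initial C F S \<longleftrightarrow> S \<subseteq> F \<and> (\<forall>\<phi> \<in> F. \<exists>\<psi> \<in> S. fgeq C \<psi> \<phi>)"

definition pull_back :: "('o,'a) cat \<Rightarrow> 'a \<Rightarrow> 'a set \<Rightarrow> 'a set" where
  "pull_back C f F = {cmp C \<phi> f | \<phi>. \<phi> \<in> F}"

definition reduced :: "('o,'a) cat \<Rightarrow> 'o \<Rightarrow> 'a set \<Rightarrow> bool" where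
  "reduced C d F \<longleftrightarrow> proj_filtration C d F \<and>
     (\<exists>S. initial C F S \<and> (\<forall>e \<in> S. extremal_epi C e))"

text \<open>Objects of P(D) are pairs (d,F); an arrow (d1,F1) -> (d2,F2) given by f is
  represented as the triple ((d1,F1), f, (d2,F2)).\<close>
type_synonym ('o,'a) pobj = "'o \<times> 'a set"
type_synonym ('o,'a) parr = "('o,'a) pobj \<times> 'a \<times> ('o,'a) pobj"

definition Pcat :: "('o,'a) cat \<Rightarrow> (('o,'a) pobj, ('o,'a) parr) cat" where
  "Pcat C = \<lparr> ob = {(d,F). d \<in> ob C \<and> proj_filtration C d F},
              ar = {((d1,F1), f, (d2,F2)) | d1 F1 f d2 F2.
                      d1 \<in> ob C \<and> proj_filtration C d1 F1 \<and>
                      d2 \<in> ob C \<and> proj_filtration C d2 F2 \<and>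
                      f \<in> hom C d1 d2 \<and> pull_back C f F2 \<subseteq> F1},
              dm = (\<lambda>a. fst a),
              cd = (\<lambda>a. snd (snd a)),
              ident = (\<lambda>X. (X, ident C (fst X), X)),
              cmp = (\<lambda>b a. (fst a, cmp C (fst (snd b)) (fst (snd a)), snd (snd b))) \<rparr>"

definition Qcat :: "('o,'a) cat \<Rightarrow> (('o,'a) pobj, ('o,'a) parr) cat" where
  "Qcat C = \<lparr> ob = {X \<in> ob (Pcat C). reduced C (fst X) (snd X)},
              ar = {a \<in> ar (Pcat C). reduced C (fst (fst a)) (snd (fst a)) \<and>
                                    reduced C (fst (snd (snd a))) (snd (snd (snd a)))},
              dm = dm (Pcat C), cd = cd (Pcat C),
              ident = ident (Pcat C), cmp = cmp (Pcat C) \<rparr>"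

definition hatF :: "('o,'a) cat \<Rightarrow> 'o \<Rightarrow> 'a set \<Rightarrow> 'a set" where
  "hatF C d F = saturation C d
     {e. \<exists>\<phi> \<in> F. \<exists>m. extremal_epi C e \<and> monic C m \<and> cd C e = dm C m \<and> \<phi> = cmp C m e}"

definition R_ob :: "('o,'a) cat \<Rightarrow> ('o,'a) pobj \<Rightarrow> ('o,'a) pobj" where
  "R_ob C X = (fst X, hatF C (fst X) (snd X))"

definition R_ar :: "('o,'a) cat \<Rightarrow> ('o,'a) parr \<Rightarrow> ('o,'a) parr" where
  "R_ar C a = (R_ob C (fst a), fst (snd a), R_ob C (snd (snd a)))"

end

theory Submission
  imports Defs
begin

lemma cat_ar_ob: "category C \<Longrightarrow> f \<in> ar C \<Longrightarrow> dm C f \<in> ob C \<and> cd C f \<in> ob C"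
  unfolding category_def by blast

lemma cat_id: "category C \<Longrightarrow> x \<in> ob C \<Longrightarrow> ident C x \<in> ar C \<and> dm C (ident C x) = x \<and> cd C (ident C x) = x"
  unfolding category_def hom_def by blast

lemma cat_cmp: "category C \<Longrightarrow> f \<in> ar C \<Longrightarrow> g \<in> ar C \<Longrightarrow> cd C f = dm C g \<Longrightarrow>
   cmp C g f \<in> ar C \<and> dm C (cmp C g f) = dm C f \<and> cd C (cmp C g f) = cd C g"
  unfolding category_def hom_def by blast

lemma cat_idl: "category C \<Longrightarrow> f \<in> ar C \<Longrightarrow> cmp C (ident C (cd C f)) f = f"
  unfolding category_def by blast

lemma cat_idr: "category C \<Longrightarrow> f \<in> ar C \<Longrightarrow> cmp C f (ident C (dm C f)) = f"
  unfolding category_def by blast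

lemma cat_assoc: "category C \<Longrightarrow> f \<in> ar C \<Longrightarrow> g \<in> ar C \<Longrightarrow> h \<in> ar C \<Longrightarrow> cd C f = dm C g \<Longrightarrow> cd C g = dm C h \<Longrightarrow>
        cmp C h (cmp C g f) = cmp C (cmp C h g) f"
  unfolding category_def by blast

lemma fgeq_refl: "category C \<Longrightarrow> f \<in> ar C \<Longrightarrow> fgeq C f f"
  unfolding fgeq_def using cat_id cat_ar_ob cat_idl by metis

lemma fgeq_ar: "category C \<Longrightarrow> f \<in> ar C \<Longrightarrow> fgeq C f g \<Longrightarrow> g \<in> ar C \<and> dm C g = dm C f"
  unfolding fgeq_def using cat_cmp by metis

lemma fgeq_trans: "category C \<Longrightarrow> f \<in> ar C \<Longrightarrow> fgeq C f g \<Longrightarrow> fgeq C g k \<Longrightarrow> fgeq C f k"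
proof -
  assume c: "category C" and f: "f \<in> ar C" and fg: "fgeq C f g" and gk: "fgeq C g k"
  obtain h1 where h1: "h1 \<in> ar C" "dm C h1 = cd C f" "cmp C h1 f = g" using fg unfolding fgeq_def by blast
  obtain h2 where h2: "h2 \<in> ar C" "dm C h2 = cd C g" "cmp C h2 g = k" using gk unfolding fgeq_def by blast
  have cg: "cd C g = cd C h1" using cat_cmp[OF c f h1(1)] h1 by simp
  have "cmp C (cmp C h2 h1) f = k" using cat_assoc[OF c f h1(1) h2(1)] h1 h2 cg by simp
  moreover have "cmp C h2 h1 \<in> ar C \<and> dm C (cmp C h2 h1) = cd C f"
    using cat_cmp[OF c h1(1) h2(1)] h1 h2 cg by simp
  ultimately show ?thesis unfolding fgeq_def by blast
qed

lemma fgeq_cmp: "category C \<Longrightarrow> f \<in> ar C \<Longrightarrow> m \<in> ar C \<Longrightarrow> cd C f = dm C m \<Longrightarrow> fgeq C f (cmp C m f)"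
  unfolding fgeq_def by metis

lemma monic_id: "category C \<Longrightarrow> x \<in> ob C \<Longrightarrow> monic C (ident C x)"
  unfolding monic_def using cat_id cat_idl by metis

lemma eem_cat: "extremal_epi_mono_category C \<Longrightarrow> category C"
  unfolding extremal_epi_mono_category_def by blast

lemma ee_ar: "extremal_epi C e \<Longrightarrow> e \<in> ar C"
  unfolding extremal_epi_def epic_def by blast

lemma mo_ar: "monic C e \<Longrightarrow> e \<in> ar C"
  unfolding monic_def by blast

lemma diag:
  assumes D: "extremal_epi_mono_category C" and e: "extremal_epi C e" and m: "monic C m"
    and u: "u \<in> ar C" and v: "v \<in> ar C" and "dm C u = dm C e" "cd C u = dm C m" "dm C v = cd C e"
    "cd C v = cd C m" "cmp C v e = cmp C m u"
  shows "fgeq C e u"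
proof -
  from D have "\<exists>!w. w \<in> hom C (cd C e) (dm C m) \<and> cmp C w e = u \<and> cmp C m w = v"
    unfolding extremal_epi_mono_category_def using assms by blast
  then obtain w where "w \<in> hom C (cd C e) (dm C m)" "cmp C w e = u" by blast
  thus ?thesis unfolding fgeq_def hom_def by blast
qed

lemma fact:
  assumes D: "extremal_epi_mono_category C" and p: "p \<in> ar C"
  obtains e m where "extremal_epi C e" "monic C m" "cd C e = dm C m" "p = cmp C m e"
    "e \<in> ar C" "m \<in> ar C" "dm C e = dm C p" "cd C m = cd C p"
proof -
  obtain e m where em: "extremal_epi C e" "monic C m" "cd C e = dm C m" "p = cmp C m e"
    using D p unfolding extremal_epi_mono_category_def by blast
  have c: "category C" using eem_cat[OF D] .
  show ?thesis using that[OF em ee_ar[OF em(1)] mo_ar[OF em(2)]] cat_cmp[OF c ee_ar[OF em(1)] mo_ar[OF em(2)] em(3)] em(4)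
    by simp
qed

definition genE :: "('o,'a) cat \<Rightarrow> 'a set \<Rightarrow> 'a set" where
  "genE C F = {e. \<exists>\<phi> \<in> F. \<exists>m. extremal_epi C e \<and> monic C m \<and> cd C e = dm C m \<and> \<phi> = cmp C m e}"

lemma hatF_eq: "hatF C d F = saturation C d (genE C F)"
  unfolding hatF_def genE_def by simp

lemma keyA:
  assumes D: "extremal_epi_mono_category C"
    and f1: "extremal_epi C e" "monic C m" "cd C e = dm C m"
    and f2: "extremal_epi C e1" "monic C m1" "cd C e1 = dm C m1"
    and g: "fgeq C (cmp C m e) (cmp C m1 e1)"
  shows "fgeq C e e1"
proof -
  have c: "category C" using eem_cat[OF D] .
  note a = ee_ar[OF f1(1)] mo_ar[OF f1(2)] ee_ar[OF f2(1)] mo_ar[OF f2(2)]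
  obtain h where h: "h \<in> ar C" "dm C h = cd C (cmp C m e)" "cmp C h (cmp C m e) = cmp C m1 e1"
    using g unfolding fgeq_def by blast
  have hm: "dm C h = cd C m" using h(2) cat_cmp[OF c a(1) a(2) f1(3)] by simp
  have hm2: "cmp C (cmp C h m) e = cmp C m1 e1" using h(3) cat_assoc[OF c a(1) a(2) h(1) f1(3) hm[symmetric]] by simp
  have cm: "cmp C h m \<in> ar C \<and> dm C (cmp C h m) = dm C m \<and> cd C (cmp C h m) = cd C h"
    using cat_cmp[OF c a(2) h(1) hm[symmetric]] .
  have e1: "dm C e1 = dm C e"
    using arg_cong[OF h(3), of "dm C"] cat_cmp[OF c a(3) a(4) f2(3)] cat_cmp[OF c a(1) a(2) f1(3)]
      cat_cmp[OF c _ h(1)] h(2) by (metis)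
  have cdh: "cd C h = cd C m1"
    using arg_cong[OF h(3), of "cd C"] cat_cmp[OF c a(3) a(4) f2(3)] cat_cmp[OF c a(1) a(2) f1(3)]
      cat_cmp[OF c _ h(1)] h(2) by (metis)
  show ?thesis
    apply (rule diag[OF D f1(1) f2(2) a(3) conjunct1[OF cm]])
    using e1 f2(3) cm f1(3) cdh hm2 by auto
qed

lemma keyB:
  assumes D: "extremal_epi_mono_category C"
    and f1: "extremal_epi C e" "monic C m" "cd C e = dm C m"
    and f2: "extremal_epi C e2" "monic C m2" "cd C e2 = dm C m2"
    and f: "f \<in> ar C" "cd C f = dm C e2"
    and eq: "cmp C (cmp C m2 e2) f = cmp C m e"
  shows "fgeq C e (cmp C e2 f)"
proof -
  have c: "category C" using eem_cat[OF D] .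
  note a = ee_ar[OF f1(1)] mo_ar[OF f1(2)] ee_ar[OF f2(1)] mo_ar[OF f2(2)]
  have ef: "cmp C e2 f \<in> ar C \<and> dm C (cmp C e2 f) = dm C f \<and> cd C (cmp C e2 f) = cd C e2"
    using cat_cmp[OF c f(1) a(3) f(2)] .
  have eq2: "cmp C m (e) = cmp C m2 (cmp C e2 f)"
    using eq cat_assoc[OF c f(1) a(3) a(4) f(2) f2(3)] by simp
  have d1: "dm C e = dm C f" using arg_cong[OF eq2, of "dm C"] cat_cmp[OF c a(1) a(2) f1(3)]
     cat_cmp[OF c _ a(4)] ef f2(3) by metis
  have d2: "cd C m = cd C m2" using arg_cong[OF eq2, of "cd C"] cat_cmp[OF c a(1) a(2) f1(3)]
     cat_cmp[OF c _ a(4)] ef f2(3) by metis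
  show ?thesis
    apply (rule diag[OF D f1(1) f2(2) conjunct1[OF ef] a(2)])
    using ef d1 d2 f2(3) f1(3) eq2 by auto
qed

lemma genE_M: "category C \<Longrightarrow> F \<subseteq> M C d \<Longrightarrow> e \<in> genE C F \<Longrightarrow> e \<in> M C d"
  unfolding genE_def M_def using cat_cmp ee_ar mo_ar by (smt (verit) mem_Collect_eq subsetD)

lemma genE_hat: "category C \<Longrightarrow> F \<subseteq> M C d \<Longrightarrow> e \<in> genE C F \<Longrightarrow> e \<in> hatF C d F"
  unfolding hatF_eq saturation_def using genE_M fgeq_refl
  by (metis (no_types, lifting) M_def mem_Collect_eq)

lemma F_hat: assumes D: "extremal_epi_mono_category C" and F: "F \<subseteq> M C d"
  shows "F \<subseteq> hatF C d F"
proof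
  fix p assume p: "p \<in> F"
  have c: "category C" using eem_cat[OF D] .
  have pa: "p \<in> ar C" using p F unfolding M_def by blast
  obtain e m where em: "extremal_epi C e" "monic C m" "cd C e = dm C m" "p = cmp C m e"
    "e \<in> ar C" "m \<in> ar C" by (rule fact[OF D pa])
  have "e \<in> genE C F" unfolding genE_def using em p by blast
  moreover have "fgeq C e p" using fgeq_cmp[OF c em(5) em(6) em(3)] em(4) by simp
  ultimately show "p \<in> hatF C d F" unfolding hatF_eq saturation_def using p F by blast
qed

lemma hat_pf: assumes D: "extremal_epi_mono_category C" and F: "proj_filtration C d F"
  shows "reduced C d (hatF C d F)"
proof -
  have c: "category C" using eem_cat[OF D] .
  have FM: "F \<subseteq> M C d" using F unfolding proj_filtration_def by blast
  have sub: "hatF C d F \<subseteq> M C d" unfolding hatF_eq saturation_def by blast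
  have ne: "hatF C d F \<noteq> {}" using F_hat[OF D FM] F unfolding proj_filtration_def by blast
  have mem: "\<And>q. q \<in> hatF C d F \<Longrightarrow> \<exists>e \<in> genE C F. fgeq C e q"
    unfolding hatF_eq saturation_def by blast
  have dir: "directed C (hatF C d F)"
    unfolding directed_def
  proof (intro ballI)
    fix q1 q2 assume q1: "q1 \<in> hatF C d F" and q2: "q2 \<in> hatF C d F"
    obtain e1 where e1: "e1 \<in> genE C F" "fgeq C e1 q1" using mem[OF q1] by blast
    obtain e2 where e2: "e2 \<in> genE C F" "fgeq C e2 q2" using mem[OF q2] by blast
    obtain p1 m1 where p1: "p1 \<in> F" "extremal_epi C e1" "monic C m1" "cd C e1 = dm C m1" "p1 = cmp C m1 e1"
      using e1(1) unfolding genE_def by blast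
    obtain p2 m2 where p2: "p2 \<in> F" "extremal_epi C e2" "monic C m2" "cd C e2 = dm C m2" "p2 = cmp C m2 e2"
      using e2(1) unfolding genE_def by blast
    obtain p where p: "p \<in> F" "fgeq C p p1" "fgeq C p p2"
      using F p1(1) p2(1) unfolding proj_filtration_def directed_def by blast
    have pa: "p \<in> ar C" using p FM unfolding M_def by blast
    obtain e m where em: "extremal_epi C e" "monic C m" "cd C e = dm C m" "p = cmp C m e"
      "e \<in> ar C" "m \<in> ar C" by (rule fact[OF D pa])
    have eg: "e \<in> genE C F" unfolding genE_def using em p by blast
    have "fgeq C e e1" using keyA[OF D em(1-3) p1(2-4)] p(2) em(4) p1(5) by simp
    hence g1: "fgeq C e q1" using fgeq_trans[OF c em(5) _ e1(2)] by simp
    have "fgeq C e e2" using keyA[OF D em(1-3) p2(2-4)] p(3) em(4) p2(5) by simp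
    hence g2: "fgeq C e q2" using fgeq_trans[OF c em(5) _ e2(2)] by simp
    show "\<exists>\<psi>\<in>hatF C d F. fgeq C \<psi> q1 \<and> fgeq C \<psi> q2"
      using genE_hat[OF c FM eg] g1 g2 by blast
  qed
  have sat: "saturated C d (hatF C d F)"
    unfolding saturated_def
  proof (intro ballI impI)
    fix q1 q2 assume q1: "q1 \<in> hatF C d F" and q2: "q2 \<in> M C d" and g: "fgeq C q1 q2"
    obtain e1 where e1: "e1 \<in> genE C F" "fgeq C e1 q1" using mem[OF q1] by blast
    have "e1 \<in> ar C" using genE_M[OF c FM e1(1)] unfolding M_def by blast
    hence "fgeq C e1 q2" using fgeq_trans[OF c _ e1(2) g] by simp
    thus "q2 \<in> hatF C d F" using e1(1) q2 unfolding hatF_eq saturation_def by blast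
  qed
  have ini: "initial C (hatF C d F) (genE C F)"
    unfolding initial_def using genE_hat[OF c FM] mem by blast
  show ?thesis unfolding reduced_def proj_filtration_def
    using sub ne dir sat ini unfolding genE_def by blast
qed

lemma fgeq_pre: assumes c: "category C" and g: "fgeq C a b" and a: "a \<in> ar C" and f: "f \<in> ar C" "cd C f = dm C a"
  shows "fgeq C (cmp C a f) (cmp C b f)"
proof -
  obtain h where h: "h \<in> ar C" "dm C h = cd C a" "cmp C h a = b" using g unfolding fgeq_def by blast
  have "cmp C h (cmp C a f) = cmp C b f" using cat_assoc[OF c f(1) a h(1) f(2) h(2)[symmetric]] h(3) by simp
  moreover have "dm C h = cd C (cmp C a f)" using cat_cmp[OF c f(1) a f(2)] h(2) by simp
  ultimately show ?thesis unfolding fgeq_def using h(1) by blast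
qed

lemma pb_hat: assumes D: "extremal_epi_mono_category C" and F1: "proj_filtration C d1 F1"
  and F2: "proj_filtration C d2 F2" and f: "f \<in> hom C d1 d2" and pb: "pull_back C f F2 \<subseteq> F1"
  shows "pull_back C f (hatF C d2 F2) \<subseteq> hatF C d1 F1"
proof
  fix x assume "x \<in> pull_back C f (hatF C d2 F2)"
  then obtain q where q: "q \<in> hatF C d2 F2" "x = cmp C q f" unfolding pull_back_def by blast
  have c: "category C" using eem_cat[OF D] .
  have F1M: "F1 \<subseteq> M C d1" using F1 unfolding proj_filtration_def by blast
  have F2M: "F2 \<subseteq> M C d2" using F2 unfolding proj_filtration_def by blast
  have fa: "f \<in> ar C" "dm C f = d1" "cd C f = d2" using f unfolding hom_def by auto
  obtain e2 where e2: "e2 \<in> genE C F2" "fgeq C e2 q" "q \<in> M C d2"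
    using q(1) unfolding hatF_eq saturation_def by blast
  obtain p2 m2 where p2: "p2 \<in> F2" "extremal_epi C e2" "monic C m2" "cd C e2 = dm C m2" "p2 = cmp C m2 e2"
    using e2(1) unfolding genE_def by blast
  have e2M: "e2 \<in> M C d2" using genE_M[OF c F2M e2(1)] .
  have p2a: "p2 \<in> ar C" "dm C p2 = d2" using p2(1) F2M unfolding M_def by auto
  have pf: "cmp C p2 f \<in> F1" using pb p2(1) unfolding pull_back_def by blast
  have pfa: "cmp C p2 f \<in> ar C" using pf F1M unfolding M_def by blast
  obtain e m where em: "extremal_epi C e" "monic C m" "cd C e = dm C m" "cmp C p2 f = cmp C m e"
    "e \<in> ar C" "m \<in> ar C" by (rule fact[OF D pfa])
  have eg: "e \<in> genE C F1" unfolding genE_def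
    by (rule CollectI, rule bexI[OF _ pf], rule exI[of _ m]) (use em in simp)
  have "fgeq C e (cmp C e2 f)" using keyB[OF D em(1-3) p2(2-4) fa(1)] e2M fa(3) p2(5) em(4)
    unfolding M_def by simp
  moreover have "fgeq C (cmp C e2 f) (cmp C q f)"
    using fgeq_pre[OF c e2(2) _ fa(1)] e2M fa(3) unfolding M_def by simp
  ultimately have g: "fgeq C e x" using fgeq_trans[OF c em(5)] q(2) by blast
  have "x \<in> M C d1" using q(2) e2(3) fa cat_cmp[OF c fa(1)] unfolding M_def by auto
  thus "x \<in> hatF C d1 F1" using g eg unfolding hatF_eq saturation_def by blast
qed

lemma red_hat: assumes D: "extremal_epi_mono_category C" and R: "reduced C d F"
  shows "hatF C d F = F"
proof
  have c: "category C" using eem_cat[OF D] .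
  have F: "proj_filtration C d F" using R unfolding reduced_def by blast
  have FM: "F \<subseteq> M C d" using F unfolding proj_filtration_def by blast
  obtain S where S: "initial C F S" "\<forall>e \<in> S. extremal_epi C e" using R unfolding reduced_def by blast
  show "F \<subseteq> hatF C d F" using F_hat[OF D FM] .
  show "hatF C d F \<subseteq> F"
  proof
    fix q assume "q \<in> hatF C d F"
    then obtain e where e: "e \<in> genE C F" "fgeq C e q" "q \<in> M C d"
      unfolding hatF_eq saturation_def by blast
    obtain p m where p: "p \<in> F" "extremal_epi C e" "monic C m" "cd C e = dm C m" "p = cmp C m e"
      using e(1) unfolding genE_def by blast
    obtain s where s: "s \<in> S" "fgeq C s p" using S(1) p(1) unfolding initial_def by blast
    have sF: "s \<in> F" using s(1) S(1) unfolding initial_def by blast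
    have sa: "s \<in> ar C" "dm C s = d" using sF FM unfolding M_def by auto
    have ob: "cd C s \<in> ob C" using cat_ar_ob[OF c sa(1)] by simp
    have "fgeq C (cmp C (ident C (cd C s)) s) (cmp C m e)" using s(2) p(5) cat_idl[OF c sa(1)] by simp
    hence "fgeq C s e" using keyA[OF D _ monic_id[OF c ob] _ p(2-4)] S(2) s(1) cat_id[OF c ob] by auto
    moreover have "e \<in> M C d" using genE_M[OF c FM e(1)] .
    ultimately have "e \<in> F" using F sF unfolding proj_filtration_def saturated_def by blast
    thus "q \<in> F" using F e(2,3) unfolding proj_filtration_def saturated_def by blast
  qed
qed

lemma Pob: "X \<in> ob (Pcat C) \<longleftrightarrow> fst X \<in> ob C \<and> proj_filtration C (fst X) (snd X)"
  unfolding Pcat_def by (cases X) auto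

lemma Par: "a \<in> ar (Pcat C) \<longleftrightarrow> fst (fst a) \<in> ob C \<and> proj_filtration C (fst (fst a)) (snd (fst a)) \<and>
   fst (snd (snd a)) \<in> ob C \<and> proj_filtration C (fst (snd (snd a))) (snd (snd (snd a))) \<and>
   fst (snd a) \<in> hom C (fst (fst a)) (fst (snd (snd a))) \<and>
   pull_back C (fst (snd a)) (snd (snd (snd a))) \<subseteq> snd (fst a)"
  unfolding Pcat_def by (cases a) auto

lemma Qob: "X \<in> ob (Qcat C) \<longleftrightarrow> X \<in> ob (Pcat C) \<and> reduced C (fst X) (snd X)"
  unfolding Qcat_def by simp

lemma Qar: "a \<in> ar (Qcat C) \<longleftrightarrow> a \<in> ar (Pcat C) \<and> reduced C (fst (fst a)) (snd (fst a)) \<and>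
   reduced C (fst (snd (snd a))) (snd (snd (snd a)))"
  unfolding Qcat_def by simp

lemma Pstuff: "dm (Pcat C) a = fst a" "cd (Pcat C) a = snd (snd a)" "ident (Pcat C) X = (X, ident C (fst X), X)"
  "cmp (Pcat C) b a = (fst a, cmp C (fst (snd b)) (fst (snd a)), snd (snd b))"
  "dm (Qcat C) = dm (Pcat C)" "cd (Qcat C) = cd (Pcat C)" "ident (Qcat C) = ident (Pcat C)" "cmp (Qcat C) = cmp (Pcat C)"
  unfolding Pcat_def Qcat_def by simp_all

lemma Rstuff: "fst (R_ob C X) = fst X" "snd (R_ob C X) = hatF C (fst X) (snd X)"
  "fst (R_ar C a) = R_ob C (fst a)" "fst (snd (R_ar C a)) = fst (snd a)" "snd (snd (R_ar C a)) = R_ob C (snd (snd a))"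
  unfolding R_ob_def R_ar_def by simp_all

lemma RF: assumes D: "extremal_epi_mono_category D"
  shows "is_functor (Pcat D) (Qcat D) (R_ob D) (R_ar D)"
  unfolding is_functor_def
proof (intro conjI ballI impI)
  have c: "category D" using eem_cat[OF D] .
  fix x assume x: "x \<in> ob (Pcat D)"
  show "R_ob D x \<in> ob (Qcat D)"
    using x hat_pf[OF D] unfolding Qob Pob Rstuff reduced_def by blast
next
  fix f assume f: "f \<in> ar (Pcat D)"
  have pf: "pull_back D (fst (snd f)) (hatF D (fst (snd (snd f))) (snd (snd (snd f)))) \<subseteq> hatF D (fst (fst f)) (snd (fst f))"
    using pb_hat[OF D] f unfolding Par by blast
  have "R_ar D f \<in> ar (Qcat D)"
    using f pf hat_pf[OF D] unfolding Qar Par Rstuff reduced_def by blast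
  then show "R_ar D f \<in> hom (Qcat D) (R_ob D (dm (Pcat D) f)) (R_ob D (cd (Pcat D) f))"
    by (simp add: hom_def Pstuff Rstuff)
next
  fix x assume x: "x \<in> ob (Pcat D)"
  show "R_ar D (ident (Pcat D) x) = ident (Qcat D) (R_ob D x)"
    unfolding Pstuff R_ar_def R_ob_def by simp
next
  fix f g assume "f \<in> ar (Pcat D)" "g \<in> ar (Pcat D)"
  show "R_ar D (cmp (Pcat D) g f) = cmp (Qcat D) (R_ar D g) (R_ar D f)"
    unfolding Pstuff R_ar_def R_ob_def by simp
qed

theorem mainTheorem3:
  fixes D :: "('o,'a) cat"
  assumes "extremal_epi_mono_category D"
  shows "is_functor (Pcat D) (Qcat D) (R_ob D) (R_ar D)
       \<and> faithful (Pcat D) (Qcat D) (R_ob D) (R_ar D)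
       \<and> (\<forall>X \<in> ob (Qcat D). R_ob D (id X) = X)
       \<and> (\<forall>a \<in> ar (Qcat D). R_ar D (id a) = a)
       \<and> adjunction (Qcat D) (Pcat D) id id (R_ob D) (R_ar D)"
proof -
  note D = assms
  have c: "category D" using eem_cat[OF D] .
  have F: "is_functor (Pcat D) (Qcat D) (R_ob D) (R_ar D)" using RF[OF D] .
  have fa: "faithful (Pcat D) (Qcat D) (R_ob D) (R_ar D)"
    unfolding faithful_def
  proof (intro conjI F ballI inj_onI)
    fix x y a b assume a: "a \<in> hom (Pcat D) x y" and b: "b \<in> hom (Pcat D) x y" and e: "R_ar D a = R_ar D b"
    have "fst (snd a) = fst (snd b)" using arg_cong[OF e, of "\<lambda>z. fst (snd z)"] unfolding Rstuff .
    moreover have "fst a = fst b" "snd (snd a) = snd (snd b)" using a b unfolding hom_def Pstuff by auto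
    ultimately show "a = b" by (simp add: prod_eq_iff)
  qed
  have ro: "\<forall>X \<in> ob (Qcat D). R_ob D (id X) = X"
  proof
    fix X assume "X \<in> ob (Qcat D)"
    hence "hatF D (fst X) (snd X) = snd X" using red_hat[OF D] unfolding Qob by blast
    thus "R_ob D (id X) = X" unfolding R_ob_def by (simp add: prod_eq_iff)
  qed
  have ra: "\<forall>a \<in> ar (Qcat D). R_ar D (id a) = a"
  proof
    fix a assume "a \<in> ar (Qcat D)"
    hence "hatF D (fst (fst a)) (snd (fst a)) = snd (fst a)" "hatF D (fst (snd (snd a))) (snd (snd (snd a))) = snd (snd (snd a))"
      using red_hat[OF D] unfolding Qar by blast+
    thus "R_ar D (id a) = a" unfolding R_ar_def R_ob_def by (simp add: prod_eq_iff)
  qed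
  have I: "is_functor (Qcat D) (Pcat D) id id"
    unfolding is_functor_def hom_def by (auto simp: Qob Qar Pstuff)
  have adj: "\<forall>x \<in> ob (Qcat D). ident (Qcat D) x \<in> hom (Qcat D) x (R_ob D (id x)) \<and>
        (\<forall>e \<in> ob (Pcat D). \<forall>f \<in> hom (Qcat D) x (R_ob D e).
            \<exists>!g. g \<in> hom (Pcat D) (id x) e \<and> cmp (Qcat D) (R_ar D g) (ident (Qcat D) x) = f)"
  proof (intro ballI conjI)
    fix x assume x: "x \<in> ob (Qcat D)"
    have rx: "R_ob D x = x" using ro x by simp
    have xP: "fst x \<in> ob D" "proj_filtration D (fst x) (snd x)" "reduced D (fst x) (snd x)"
      using x unfolding Qob Pob by auto
    have idD: "ident D (fst x) \<in> hom D (fst x) (fst x)" using cat_id[OF c xP(1)] unfolding hom_def by simp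
    have "pull_back D (ident D (fst x)) (snd x) \<subseteq> snd x"
    proof
      fix z assume "z \<in> pull_back D (ident D (fst x)) (snd x)"
      then obtain p where p: "p \<in> snd x" "z = cmp D p (ident D (fst x))" unfolding pull_back_def by blast
      have "p \<in> ar D" "dm D p = fst x" using p(1) xP(2) unfolding proj_filtration_def M_def by auto
      thus "z \<in> snd x" using p cat_idr[OF c] by metis
    qed
    hence "ident (Qcat D) x \<in> ar (Qcat D)" using xP idD unfolding Qar Par Pstuff by simp
    thus "ident (Qcat D) x \<in> hom (Qcat D) x (R_ob D (id x))" using rx unfolding hom_def Pstuff by simp
  next
    fix x e f assume x: "x \<in> ob (Qcat D)" and e: "e \<in> ob (Pcat D)" and f: "f \<in> hom (Qcat D) x (R_ob D e)"
    have rx: "R_ob D x = x" using ro x by simp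
    have fP: "f \<in> ar (Pcat D)" "fst f = x" "snd (snd f) = R_ob D e" using f unfolding hom_def Qar Pstuff by auto
    have f0: "fst (snd f) \<in> hom D (fst x) (fst e)" "pull_back D (fst (snd f)) (hatF D (fst e) (snd e)) \<subseteq> snd x"
      using fP unfolding Par by (auto simp: Rstuff)
    have eP: "fst e \<in> ob D" "proj_filtration D (fst e) (snd e)" using e unfolding Pob by auto
    have eh: "snd e \<subseteq> hatF D (fst e) (snd e)" using F_hat[OF D] eP(2) unfolding proj_filtration_def by blast
    have pb: "pull_back D (fst (snd f)) (snd e) \<subseteq> snd x" using f0(2) eh unfolding pull_back_def by blast
    have f0a: "fst (snd f) \<in> ar D" "dm D (fst (snd f)) = fst x" using f0(1) unfolding hom_def by auto
    have comp: "\<And>g. g \<in> ar (Pcat D) \<Longrightarrow> fst g = x \<Longrightarrow> cmp (Qcat D) (R_ar D g) (ident (Qcat D) x) = (x, fst (snd g), R_ob D (snd (snd g)))"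
    proof -
      fix g assume g: "g \<in> ar (Pcat D)" "fst g = x"
      have "fst (snd g) \<in> ar D" "dm D (fst (snd g)) = fst x" using g unfolding Par hom_def by auto
      hence "cmp D (fst (snd g)) (ident D (fst x)) = fst (snd g)" using cat_idr[OF c] by metis
      thus "cmp (Qcat D) (R_ar D g) (ident (Qcat D) x) = (x, fst (snd g), R_ob D (snd (snd g)))"
        unfolding Pstuff Rstuff by simp
    qed
    show "\<exists>!g. g \<in> hom (Pcat D) (id x) e \<and> cmp (Qcat D) (R_ar D g) (ident (Qcat D) x) = f"
    proof (rule ex1I[of _ "(x, fst (snd f), e)"])
      have gP: "(x, fst (snd f), e) \<in> ar (Pcat D)" using x e f0(1) pb unfolding Par Qob Pob by simp
      show "(x, fst (snd f), e) \<in> hom (Pcat D) (id x) e \<and> cmp (Qcat D) (R_ar D (x, fst (snd f), e)) (ident (Qcat D) x) = f"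
        using gP comp[OF gP] fP unfolding hom_def Pstuff by (simp add: prod_eq_iff)
    next
      fix g assume g: "g \<in> hom (Pcat D) (id x) e \<and> cmp (Qcat D) (R_ar D g) (ident (Qcat D) x) = f"
      have ga: "g \<in> ar (Pcat D)" "fst g = x" "snd (snd g) = e" using g unfolding hom_def Pstuff by auto
      have "fst (snd g) = fst (snd f)" using comp[OF ga(1,2)] g fP by auto
      thus "g = (x, fst (snd f), e)" using ga by (simp add: prod_eq_iff)
    qed
  qed
  have "adjunction (Qcat D) (Pcat D) id id (R_ob D) (R_ar D)"
    unfolding adjunction_def using I F adj by blast
  thus ?thesis using F fa ro ra by blast
qed

end
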